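(* For integers $N>3$ and $k\in\{1,\dots,N-2\}$ and real $t>0$, let $I_t(k,N)=\sum_{j=k+1}^{N-1}e^{-t(1-\cos(\pi j/N))}$. Then (i) $\displaystyle I_t(k,N)\le \frac12\sqrt{\frac\pi2}\,\frac{N}{\sqrt t}\,e^{-2tk^2/N^2}$, and (ii) $\displaystyle I_t(k,N)\le \frac12\,\frac{N^2}{kt}\,e^{-2tk^2/N^2}$. *)

theory Defs
  imports Complex_Main
begin

definition I_sum :: "real \<Rightarrow> nat \<Rightarrow> nat \<Rightarrow> real" where
  "I_sum t k N = (\<Sum>j = k+1..N-1. exp (- t * (1 - cos (pi * real j / real N))))"

end

theory Submission imports Defs "HOL-Probability.Distributions" begin

lemma psi_le: fixes x :: real assumes "0 \<le> x" "x \<le> pi"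
  shows "x * cos x - sin x \<le> 0"
proof -
  have "(\<lambda>x. x * cos x - sin x) x \<le> (\<lambda>x. x * cos x - sin x) 0"
  proof (rule deriv_nonpos_imp_antimono[where g = "\<lambda>x. x * cos x - sin x" and g' = "\<lambda>x. - (x * sin x)"])
    fix z :: real assume "z \<in> {0..x}"
    show "((\<lambda>x. x * cos x - sin x) has_real_derivative - (z * sin z)) (at z)"
      by (auto intro!: derivative_eq_intros)
    show "- (z * sin z) \<le> 0" using \<open>z \<in> {0..x}\<close> assms sin_ge_zero[of z] by auto
  qed (use assms in auto)
  then show ?thesis by simp
qed

lemma jordan: fixes y :: real assumes "0 \<le> y" "y \<le> pi/2"
  shows "2 / pi * y \<le> sin y"
proof (cases "y = 0")
  case True then show ?thesis by simp
next
  case False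
  then have yp: "y > 0" using assms by simp
  have "(\<lambda>x. sin x / x) y \<ge> (\<lambda>x. sin x / x) (pi/2)"
  proof (rule DERIV_nonpos_imp_decreasing_open[OF assms(2)])
    fix x :: real assume x: "y < x" "x < pi/2"
    then have "x > 0" using yp by simp
    have "((\<lambda>x. sin x / x) has_real_derivative (cos x * x - sin x * 1) / (x * x)) (at x)"
      using \<open>x > 0\<close> by (auto intro!: derivative_eq_intros)
    moreover have "(cos x * x - sin x * 1) / (x * x) \<le> 0"
      using psi_le[of x] x \<open>x > 0\<close> by (intro divide_nonpos_pos) (auto simp: mult.commute)
    ultimately show "\<exists>d. ((\<lambda>x. sin x / x) has_real_derivative d) (at x) \<and> d \<le> 0" by blast
  next
    show "continuous_on {y..pi/2} (\<lambda>x. sin x / x)"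
      using yp by (intro continuous_intros) auto
  qed
  then have "2 / pi \<le> sin y / y" by simp
  then show ?thesis using yp by (simp add: field_simps)
qed

lemma gauss_half: "((\<lambda>x::real. exp (- x\<^sup>2)) has_integral (sqrt pi / 2)) {0..}"
proof -
  have h: "has_bochner_integral lborel (\<lambda>x. indicator {0..} x *\<^sub>R exp (- x\<^sup>2)) (sqrt pi / 2)"
    by (rule gaussian_moment_0)
  then have i1: "integrable lborel (\<lambda>x::real. indicator {0..} x *\<^sub>R exp (- x\<^sup>2))"
     and i2: "integral\<^sup>L lborel (\<lambda>x::real. indicator {0..} x *\<^sub>R exp (- x\<^sup>2)) = sqrt pi / 2"
    by (auto simp: has_bochner_integral_iff)
  have "((\<lambda>x::real. indicator {0..} x *\<^sub>R exp (- x\<^sup>2)) has_integral (sqrt pi / 2)) UNIV"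
    using has_integral_integral_real[OF i1] unfolding i2 .
  moreover have "(\<lambda>x::real. indicator {0..} x *\<^sub>R exp (- x\<^sup>2)) = (\<lambda>x. if x \<in> {0..} then exp (- x\<^sup>2) else 0)"
    by (auto simp: indicator_def fun_eq_iff)
  ultimately show ?thesis
    using has_integral_restrict_UNIV[of "{0..}" "\<lambda>x::real. exp (- x\<^sup>2)"] by simp
qed

lemma gauss_int_le: fixes c :: real assumes "0 \<le> c"
  shows "integral {0..c} (\<lambda>x. exp (- x\<^sup>2)) \<le> sqrt pi / 2"
proof -
  have "integral {0..c} (\<lambda>x::real. exp (- x\<^sup>2)) \<le> integral {0..} (\<lambda>x::real. exp (- x\<^sup>2))"
    by (rule integral_subset_le) (use gauss_half in \<open>auto intro!: integrable_continuous_interval continuous_intros\<close>)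
  also have "\<dots> = sqrt pi / 2" using gauss_half by (rule integral_unique)
  finally show ?thesis .
qed

lemma gauss_sum_int: fixes b :: real assumes "0 < b"
  shows "b * (\<Sum>m=1..n. exp (- (b * real m)\<^sup>2)) \<le> integral {0..b * real n} (\<lambda>x. exp (- x\<^sup>2))"
proof (induction n)
  case 0 then show ?case by simp
next
  case (Suc n)
  have int: "(\<lambda>x::real. exp (- x\<^sup>2)) integrable_on {0..b * real (Suc n)}"
    by (auto intro!: integrable_continuous_interval continuous_intros)
  have comb: "integral {0..b * real n} (\<lambda>x. exp (- x\<^sup>2)) + integral {b * real n..b * real (Suc n)} (\<lambda>x. exp (- x\<^sup>2))
      = integral {0..b * real (Suc n)} (\<lambda>x::real. exp (- x\<^sup>2))"
    using Henstock_Kurzweil_Integration.integral_combine[where a=0 and c="b * real n" and b="b * real (Suc n)" and f="\<lambda>x::real. exp (- x\<^sup>2)"] assms int by auto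
  have "b * exp (- (b * real (Suc n))\<^sup>2) = integral {b * real n..b * real (Suc n)} (\<lambda>x. exp (- (b * real (Suc n))\<^sup>2))"
    using assms by (simp add: algebra_simps)
  also have "\<dots> \<le> integral {b * real n..b * real (Suc n)} (\<lambda>x. exp (- x\<^sup>2))"
  proof (rule integral_le)
    show "(\<lambda>x::real. exp (- x\<^sup>2)) integrable_on {b * real n..b * real (Suc n)}"
      by (auto intro!: integrable_continuous_interval continuous_intros)
    fix x assume x: "x \<in> {b * real n..b * real (Suc n)}"
    have "0 \<le> x" using x assms by (auto intro: order_trans[rotated])
    then have "x\<^sup>2 \<le> (b * real (Suc n))\<^sup>2" using x by (intro power_mono) auto
    then show "exp (- (b * real (Suc n))\<^sup>2) \<le> exp (- x\<^sup>2)" by simp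
  qed (rule integrable_const_ivl)
  finally have "b * exp (- (b * real (Suc n))\<^sup>2) \<le> integral {b * real n..b * real (Suc n)} (\<lambda>x. exp (- x\<^sup>2))" .
  then show ?case using Suc comb by (simp add: distrib_left)
qed

lemma gauss_sum: fixes b :: real assumes "0 < b"
  shows "b * (\<Sum>m=1..n. exp (- (b * real m)\<^sup>2)) \<le> sqrt pi / 2"
  using gauss_sum_int[OF assms, of n] gauss_int_le[of "b * real n"] assms by simp

lemma geom_sum: fixes c :: real assumes "0 < c"
  shows "(\<Sum>m=1..n. exp (- c * real m)) \<le> 1 / c"
proof -
  define q where "q = exp (- c)"
  have q: "0 < q" "q < 1" using assms by (auto simp: q_def)
  have e: "exp (- c * real m) = q ^ m" for m by (simp add: q_def exp_of_nat_mult[symmetric] mult.commute)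
  have "(\<Sum>m=1..n. q ^ m) * (1 - q) = q - q ^ Suc n"
  proof (induction n)
    case (Suc n)
    have "(\<Sum>m=1..Suc n. q ^ m) * (1 - q) = (\<Sum>m=1..n. q ^ m) * (1 - q) + q ^ Suc n * (1 - q)"
      by (simp add: distrib_right)
    also have "\<dots> = q - q ^ Suc (Suc n)" using Suc by (simp add: algebra_simps)
    finally show ?case .
  qed simp
  then have "(\<Sum>m=1..n. q ^ m) * (1 - q) \<le> q" using q by simp
  then have "(\<Sum>m=1..n. q ^ m) \<le> q / (1 - q)" using q by (simp add: field_simps)
  also have "q / (1 - q) = 1 / (exp c - 1)" using q by (simp add: q_def exp_minus field_simps)
  also have "\<dots> \<le> 1 / c"
  proof -
    have "c \<le> exp c - 1" using exp_ge_add_one_self[of c] by linarith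
    then show ?thesis using assms by (intro divide_left_mono) auto
  qed
  finally show ?thesis unfolding e .
qed

lemma cos_bound: fixes j N :: nat assumes "j \<le> N" "N > 0"
  shows "2 * (real j / real N)\<^sup>2 \<le> 1 - cos (pi * real j / real N)"
proof -
  define y where "y = pi * real j / (2 * real N)"
  have y0: "0 \<le> y" and y1: "y \<le> pi / 2" using assms
    by (auto simp: y_def field_simps)
  have "2 / pi * y = real j / real N" using assms by (simp add: y_def field_simps)
  then have s: "real j / real N \<le> sin y" using jordan[OF y0 y1] by simp
  have "(real j / real N)\<^sup>2 \<le> (sin y)\<^sup>2" using s by (intro power_mono) auto
  moreover have "cos (pi * real j / real N) = 1 - 2 * (sin y)\<^sup>2"
    using cos_double_sin[of y] by (simp add: y_def)
  ultimately show ?thesis by simp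
qed

theorem lemma2:
  fixes N k :: nat and t :: real
  assumes "N > 3" and "1 \<le> k" and "k \<le> N - 2" and "t > 0"
  shows "I_sum t k N \<le> 1/2 * sqrt (pi/2) * real N / sqrt t * exp (- 2 * t * real k ^ 2 / real N ^ 2)
       \<and> I_sum t k N \<le> 1/2 * real N ^ 2 / (real k * t) * exp (- 2 * t * real k ^ 2 / real N ^ 2)"
proof -
  define a where "a = 2 * t / real N ^ 2"
  define b where "b = sqrt a"
  define M where "M = N - 1 - k"
  have Npos: "real N > 0" using assms by simp
  have apos: "a > 0" using assms by (simp add: a_def)
  have bpos: "b > 0" using apos by (simp add: b_def)
  have kpos: "real k > 0" using assms by simp
  have E: "exp (- 2 * t * real k ^ 2 / real N ^ 2) = exp (- a * real k ^ 2)"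
    by (simp add: a_def)
  have trm: "exp (- t * (1 - cos (pi * real j / real N))) \<le> exp (- a * real j ^ 2)"
    if "j \<le> N" for j
  proof -
    have "t * (2 * (real j / real N)\<^sup>2) \<le> t * (1 - cos (pi * real j / real N))"
      using cos_bound[OF that] assms by (intro mult_left_mono) auto
    moreover have "t * (2 * (real j / real N)\<^sup>2) = a * real j ^ 2"
      by (simp add: a_def power_divide)
    ultimately show ?thesis by simp
  qed
  have reidx: "(\<Sum>j = k+1..N-1. g (j - k)) = (\<Sum>m = 1..M. g m)" for g :: "nat \<Rightarrow> real"
  proof -
    have e1: "N - 1 = M + k" using assms by (simp add: M_def)
    have e2: "k + 1 = 1 + k" by simp
    have "(\<Sum>j = k+1..N-1. g (j - k)) = (\<Sum>j = 1+k..M+k. g (j - k))" by (simp only: e1 e2)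
    also have "\<dots> = (\<Sum>m = 1..M. g m)"
      by (subst sum.shift_bounds_cl_nat_ivl) simp
    finally show ?thesis .
  qed
  have I1: "I_sum t k N \<le> (\<Sum>j = k+1..N-1. exp (- a * real j ^ 2))"
    unfolding I_sum_def by (intro sum_mono trm) auto
  have sq: "real j ^ 2 = real k ^ 2 + 2 * real k * real (j - k) + real (j - k) ^ 2" if "k \<le> j" for j
    using that by (simp add: of_nat_diff power2_eq_square algebra_simps)
  have "(\<Sum>j = k+1..N-1. exp (- a * real j ^ 2))
      \<le> (\<Sum>j = k+1..N-1. exp (- a * real k ^ 2) * exp (- (b * real (j - k))\<^sup>2))"
  proof (intro sum_mono)
    fix j assume "j \<in> {k+1..N-1}"
    then have kj: "k \<le> j" by simp
    have "- a * real j ^ 2 \<le> - a * real k ^ 2 + - (b * real (j - k))\<^sup>2"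
      using sq[OF kj] apos kpos by (simp add: b_def power_mult_distrib algebra_simps)
    then show "exp (- a * real j ^ 2) \<le> exp (- a * real k ^ 2) * exp (- (b * real (j - k))\<^sup>2)"
      by (simp add: exp_add[symmetric])
  qed
  also have "\<dots> = exp (- a * real k ^ 2) * (\<Sum>m = 1..M. exp (- (b * real m)\<^sup>2))"
    unfolding sum_distrib_left[symmetric] reidx[of "\<lambda>m. exp (- (b * real m)\<^sup>2)"] ..
  also have "\<dots> \<le> exp (- a * real k ^ 2) * (sqrt pi / 2 / b)"
    using gauss_sum[OF bpos, of M] bpos by (intro mult_left_mono) (auto simp: field_simps)
  also have "sqrt pi / 2 / b = 1/2 * sqrt (pi/2) * real N / sqrt t"
    using Npos assms by (simp add: b_def a_def real_sqrt_divide real_sqrt_mult field_simps)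
  finally have P1: "I_sum t k N \<le> 1/2 * sqrt (pi/2) * real N / sqrt t * exp (- 2 * t * real k ^ 2 / real N ^ 2)"
    using I1 E by (simp add: mult.commute)
  have "(\<Sum>j = k+1..N-1. exp (- a * real j ^ 2))
      \<le> (\<Sum>j = k+1..N-1. exp (- a * real k ^ 2) * exp (- (2 * a * real k) * real (j - k)))"
  proof (intro sum_mono)
    fix j assume "j \<in> {k+1..N-1}"
    then have kj: "k \<le> j" by simp
    have "- a * real j ^ 2 \<le> - a * real k ^ 2 + - (2 * a * real k) * real (j - k)"
      using sq[OF kj] apos kpos by (simp add: algebra_simps)
    then show "exp (- a * real j ^ 2) \<le> exp (- a * real k ^ 2) * exp (- (2 * a * real k) * real (j - k))"
      by (simp add: exp_add[symmetric])
  qed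
  also have "\<dots> = exp (- a * real k ^ 2) * (\<Sum>m = 1..M. exp (- (2 * a * real k) * real m))"
    unfolding sum_distrib_left[symmetric] reidx[of "\<lambda>m. exp (- (2 * a * real k) * real m)"] ..
  also have "\<dots> \<le> exp (- a * real k ^ 2) * (1 / (2 * a * real k))"
    using geom_sum[of "2 * a * real k" M] apos kpos by (intro mult_left_mono) auto
  also have "\<dots> \<le> exp (- a * real k ^ 2) * (1/2 * real N ^ 2 / (real k * t))"
    using Npos assms kpos by (intro mult_left_mono) (auto simp: a_def field_simps)
  finally have P2: "I_sum t k N \<le> 1/2 * real N ^ 2 / (real k * t) * exp (- 2 * t * real k ^ 2 / real N ^ 2)"
    using I1 E by (simp add: mult.commute)
  show ?thesis using P1 P2 by blast
qed

end
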